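(* Let $X$ be a connected CW complex with fundamental group $G$ and universal cover $\widetilde X$ (with the induced cell structure), and let $\alpha\in C^k(\widetilde X;\mathbb{R})$ be a cellular cocycle. Suppose there is $\Lambda\ge0$ such that $|\alpha(c)|\le\Lambda\,\|\partial c\|_1$ for every cellular chain $c\in C_k(\widetilde X;\mathbb{R})$. Then $\alpha$ is bounded on orbits and $[\alpha]=0\in H^k_{(\infty)}(X;\mathbb{R})$. Moreover, if the $(k-1)$-skeleton of $X$ is finite, the converse holds: if $\alpha$ is a cellular cocycle bounded on orbits with $[\alpha]=0$ in $H^k_{(\infty)}(X;\mathbb{R})$, then such a $\Lambda$ exists.
   Context: $\|\cdot\|_1$ on cellular chains of $\widetilde X$ is the $\ell^1$-norm with respect to the basis of cells. $G$ acts on cells of $\widetilde X$ by covering transformations. A cellular real cochain on $\widetilde X$ is bounded on orbits if for every cell $e$ the set $\{\alpha(g\cdot e):g\in G\}$ is bounded. $H^\bullet_{(\infty)}(X;\mathbb{R})$ is (canonically isomorphic to) the cohomology of the complex of real cellular cochains on $\widetilde X$ bounded on orbits; equivalently $H^\bullet(X;\ell^\infty(G,\mathbb{R}))$ with $\ell^\infty(G,\mathbb{R})$ the bounded real functions on $G$ with action $(g f)(h)=f(g^{-1}h)$. *)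

theory Defs
  imports Complex_Main "HOL-Algebra.Group"
begin

text \<open>
  Combinatorial model of the cellular real chain complex of the universal cover
  of a CW complex X, together with the action of G = pi_1(X) by covering
  transformations.  Cells of the universal cover form the set cells; cdim e is the
  dimension of e; bd e f is the integer incidence number of the (oriented,
  lifted) cell f in the boundary of e; act g is the covering transformation of g.
\<close>

definition cw_G_complex ::
  "('g,'b) monoid_scheme \<Rightarrow> 'c set \<Rightarrow> ('c \<Rightarrow> nat) \<Rightarrow> ('c \<Rightarrow> 'c \<Rightarrow> int) \<Rightarrow> ('g \<Rightarrow> 'c \<Rightarrow> 'c) \<Rightarrow> bool"
where
  "cw_G_complex G cells cdim bd act \<longleftrightarrow>
     group G
   \<and> (\<forall>e. finite {f. bd e f \<noteq> 0})
   \<and> (\<forall>e f. bd e f \<noteq> 0 \<longrightarrow> e \<in> cells \<and> f \<in> cells \<and> cdim e = cdim f + 1)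
   \<and> (\<forall>e h. (\<Sum>f\<in>{f. bd e f \<noteq> 0}. bd e f * bd f h) = 0)
   \<and> (\<forall>g\<in>carrier G. \<forall>e\<in>cells. act g e \<in> cells \<and> cdim (act g e) = cdim e)
   \<and> (\<forall>e\<in>cells. act \<one>\<^bsub>G\<^esub> e = e)
   \<and> (\<forall>g\<in>carrier G. \<forall>h\<in>carrier G. \<forall>e\<in>cells. act (g \<otimes>\<^bsub>G\<^esub> h) e = act g (act h e))
   \<and> (\<forall>g\<in>carrier G. \<forall>e\<in>cells. \<forall>f\<in>cells. bd (act g e) (act g f) = bd e f)
   \<and> (\<forall>g\<in>carrier G. \<forall>e\<in>cells. act g e = e \<longrightarrow> g = \<one>\<^bsub>G\<^esub>)"

definition is_chain :: "'c set \<Rightarrow> ('c \<Rightarrow> nat) \<Rightarrow> nat \<Rightarrow> ('c \<Rightarrow> real) \<Rightarrow> bool" where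
  "is_chain cells cdim k c \<longleftrightarrow>
     finite {e. c e \<noteq> 0} \<and> (\<forall>e. c e \<noteq> 0 \<longrightarrow> e \<in> cells \<and> cdim e = k)"

definition chain_bdry :: "('c \<Rightarrow> 'c \<Rightarrow> int) \<Rightarrow> ('c \<Rightarrow> real) \<Rightarrow> ('c \<Rightarrow> real)" where
  "chain_bdry bd c = (\<lambda>f. \<Sum>e\<in>{e. c e \<noteq> 0}. c e * of_int (bd e f))"

definition norm1 :: "('c \<Rightarrow> real) \<Rightarrow> real" where
  "norm1 c = (\<Sum>e\<in>{e. c e \<noteq> 0}. \<bar>c e\<bar>)"

definition cochain_eval :: "('c \<Rightarrow> real) \<Rightarrow> ('c \<Rightarrow> real) \<Rightarrow> real" where
  "cochain_eval \<alpha> c = (\<Sum>e\<in>{e. c e \<noteq> 0}. c e * \<alpha> e)"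

definition coboundary :: "('c \<Rightarrow> 'c \<Rightarrow> int) \<Rightarrow> ('c \<Rightarrow> real) \<Rightarrow> 'c \<Rightarrow> real" where
  "coboundary bd \<beta> e = (\<Sum>f\<in>{f. bd e f \<noteq> 0}. of_int (bd e f) * \<beta> f)"

definition cellular_cocycle ::
  "'c set \<Rightarrow> ('c \<Rightarrow> nat) \<Rightarrow> ('c \<Rightarrow> 'c \<Rightarrow> int) \<Rightarrow> nat \<Rightarrow> ('c \<Rightarrow> real) \<Rightarrow> bool" where
  "cellular_cocycle cells cdim bd k \<alpha> \<longleftrightarrow>
     (\<forall>e\<in>cells. cdim e = k + 1 \<longrightarrow> coboundary bd \<alpha> e = 0)"

definition bounded_on_orbits ::
  "('g,'b) monoid_scheme \<Rightarrow> ('g \<Rightarrow> 'c \<Rightarrow> 'c) \<Rightarrow> 'c set \<Rightarrow> ('c \<Rightarrow> nat) \<Rightarrow> nat \<Rightarrow> ('c \<Rightarrow> real) \<Rightarrow> bool" where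
  "bounded_on_orbits G act cells cdim k \<alpha> \<longleftrightarrow>
     (\<forall>e\<in>cells. cdim e = k \<longrightarrow> (\<exists>B. \<forall>g\<in>carrier G. \<bar>\<alpha> (act g e)\<bar> \<le> B))"

text \<open>[alpha] = 0 in H^k_(infinity)(X;R): alpha is the coboundary of a (k-1)-cochain
  bounded on orbits (for k = 0 there are no (k-1)-cells, so this means alpha = 0 on 0-cells).\<close>
definition coh_infty_zero ::
  "('g,'b) monoid_scheme \<Rightarrow> ('g \<Rightarrow> 'c \<Rightarrow> 'c) \<Rightarrow> 'c set \<Rightarrow> ('c \<Rightarrow> nat) \<Rightarrow> ('c \<Rightarrow> 'c \<Rightarrow> int) \<Rightarrow> nat \<Rightarrow> ('c \<Rightarrow> real) \<Rightarrow> bool" where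
  "coh_infty_zero G act cells cdim bd k \<alpha> \<longleftrightarrow>
     (\<exists>\<beta>. (\<forall>f\<in>cells. cdim f + 1 = k \<longrightarrow> (\<exists>B. \<forall>g\<in>carrier G. \<bar>\<beta> (act g f)\<bar> \<le> B))
        \<and> (\<forall>e\<in>cells. cdim e = k \<longrightarrow> \<alpha> e = coboundary bd \<beta> e))"

definition orbit_of :: "('g,'b) monoid_scheme \<Rightarrow> ('g \<Rightarrow> 'c \<Rightarrow> 'c) \<Rightarrow> 'c \<Rightarrow> 'c set" where
  "orbit_of G act e = (\<lambda>g. act g e) ` carrier G"

text \<open>The (k-1)-skeleton of X = universal cover / G is finite: finitely many G-orbits
  of cells of dimension at most k-1.\<close>
definition finite_skeleton_below ::
  "('g,'b) monoid_scheme \<Rightarrow> ('g \<Rightarrow> 'c \<Rightarrow> 'c) \<Rightarrow> 'c set \<Rightarrow> ('c \<Rightarrow> nat) \<Rightarrow> nat \<Rightarrow> bool" where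
  "finite_skeleton_below G act cells cdim k \<longleftrightarrow>
     finite (orbit_of G act ` {e\<in>cells. cdim e + 1 \<le> k})"

end

theory Submission
  imports Defs
begin


definition fs :: "('c \<Rightarrow> real) \<Rightarrow> bool" where "fs v \<longleftrightarrow> finite {x. v x \<noteq> 0}"

lemma ev_alt: "finite S \<Longrightarrow> {e. c e \<noteq> 0} \<subseteq> S \<Longrightarrow> cochain_eval \<alpha> c = (\<Sum>e\<in>S. c e * \<alpha> e)"
  unfolding cochain_eval_def by (rule sum.mono_neutral_left) auto

lemma n1_alt: "finite S \<Longrightarrow> {e. c e \<noteq> 0} \<subseteq> S \<Longrightarrow> norm1 c = (\<Sum>e\<in>S. \<bar>c e\<bar>)"
  unfolding norm1_def by (rule sum.mono_neutral_left) auto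

lemma bd_alt: "finite S \<Longrightarrow> {e. c e \<noteq> 0} \<subseteq> S \<Longrightarrow> chain_bdry bd c f = (\<Sum>e\<in>S. c e * of_int (bd e f))"
  unfolding chain_bdry_def by (rule sum.mono_neutral_left) auto

lemma fs_add: "fs u \<Longrightarrow> fs v \<Longrightarrow> fs (\<lambda>x. u x + v x)"
  unfolding fs_def by (rule finite_subset[of _ "{x. u x \<noteq> 0} \<union> {x. v x \<noteq> 0}"]) auto

lemma fs_scale: "fs u \<Longrightarrow> fs (\<lambda>x. r * u x)"
  unfolding fs_def by (rule finite_subset[of _ "{x. u x \<noteq> 0}"]) auto

lemma ev_add: "fs u \<Longrightarrow> fs v \<Longrightarrow> cochain_eval \<alpha> (\<lambda>x. u x + v x) = cochain_eval \<alpha> u + cochain_eval \<alpha> v"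
proof -
  assume "fs u" "fs v"
  define S where "S = {x. u x \<noteq> 0} \<union> {x. v x \<noteq> 0}"
  have f: "finite S" using \<open>fs u\<close> \<open>fs v\<close> unfolding S_def fs_def by auto
  show ?thesis
    apply (subst ev_alt[OF f], force simp: S_def)
    apply (subst ev_alt[OF f, of u], force simp: S_def)
    apply (subst ev_alt[OF f, of v], force simp: S_def)
    by (simp add: sum.distrib distrib_right)
qed

lemma ev_scale: "fs u \<Longrightarrow> cochain_eval \<alpha> (\<lambda>x. r * u x) = r * cochain_eval \<alpha> u"
proof -
  assume "fs u"
  define S where "S = {x. u x \<noteq> 0}"
  have f: "finite S" using \<open>fs u\<close> unfolding S_def fs_def by auto
  show ?thesis
    apply (subst ev_alt[OF f], force simp: S_def)
    apply (subst ev_alt[OF f, of u], force simp: S_def)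
    by (simp add: sum_distrib_left mult.assoc)
qed

lemma n1_add: "fs u \<Longrightarrow> fs v \<Longrightarrow> norm1 (\<lambda>x. u x + v x) \<le> norm1 u + norm1 v"
proof -
  assume "fs u" "fs v"
  define S where "S = {x. u x \<noteq> 0} \<union> {x. v x \<noteq> 0}"
  have f: "finite S" using \<open>fs u\<close> \<open>fs v\<close> unfolding S_def fs_def by auto
  show ?thesis
    apply (subst n1_alt[OF f], force simp: S_def)
    apply (subst n1_alt[OF f, of u], force simp: S_def)
    apply (subst n1_alt[OF f, of v], force simp: S_def)
    by (simp add: sum.distrib[symmetric] sum_mono abs_triangle_ineq)
qed

lemma n1_scale: "fs u \<Longrightarrow> norm1 (\<lambda>x. r * u x) = \<bar>r\<bar> * norm1 u"
proof -
  assume "fs u"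
  define S where "S = {x. u x \<noteq> 0}"
  have f: "finite S" using \<open>fs u\<close> unfolding S_def fs_def by auto
  show ?thesis
    apply (subst n1_alt[OF f], force simp: S_def)
    apply (subst n1_alt[OF f, of u], force simp: S_def)
    by (simp add: sum_distrib_left abs_mult)
qed

lemma bd_add: "fs u \<Longrightarrow> fs v \<Longrightarrow> chain_bdry bd (\<lambda>x. u x + v x) f = chain_bdry bd u f + chain_bdry bd v f"
proof -
  assume "fs u" "fs v"
  define S where "S = {x. u x \<noteq> 0} \<union> {x. v x \<noteq> 0}"
  have f: "finite S" using \<open>fs u\<close> \<open>fs v\<close> unfolding S_def fs_def by auto
  show ?thesis
    apply (subst bd_alt[OF f], force simp: S_def)
    apply (subst bd_alt[OF f, of u], force simp: S_def)
    apply (subst bd_alt[OF f, of v], force simp: S_def)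
    by (simp add: sum.distrib distrib_right)
qed

lemma bd_scale: "fs u \<Longrightarrow> chain_bdry bd (\<lambda>x. r * u x) f = r * chain_bdry bd u f"
proof -
  assume "fs u"
  define S where "S = {x. u x \<noteq> 0}"
  have f: "finite S" using \<open>fs u\<close> unfolding S_def fs_def by auto
  show ?thesis
    apply (subst bd_alt[OF f], force simp: S_def)
    apply (subst bd_alt[OF f, of u], force simp: S_def)
    by (simp add: sum_distrib_left mult.assoc)
qed

lemma bd_fs: assumes cx: "cw_G_complex G cells cdim bd act" and u: "fs u"
  shows "fs (chain_bdry bd u)"
proof -
  have fin: "\<And>e. finite {f. bd e f \<noteq> 0}" using cx unfolding cw_G_complex_def by blast
  have "{f. chain_bdry bd u f \<noteq> 0} \<subseteq> (\<Union>e\<in>{x. u x \<noteq> 0}. {f. bd e f \<noteq> 0})"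
  proof
    fix f assume "f \<in> {f. chain_bdry bd u f \<noteq> 0}"
    then obtain e where "u e \<noteq> 0" "u e * of_int (bd e f) \<noteq> 0"
      unfolding chain_bdry_def by (auto elim: sum.not_neutral_contains_not_neutral)
    then show "f \<in> (\<Union>e\<in>{x. u x \<noteq> 0}. {f. bd e f \<noteq> 0})" by auto
  qed
  moreover have "finite (\<Union>e\<in>{x. u x \<noteq> 0}. {f. bd e f \<noteq> 0})" using u fin unfolding fs_def by auto
  ultimately show ?thesis unfolding fs_def by (rule finite_subset)
qed

lemma chain_fs: "is_chain cells cdim k c \<Longrightarrow> fs c" unfolding is_chain_def fs_def by auto




lemma uniform_bound:
  fixes \<beta> :: "'c \<Rightarrow> real"
  assumes cx: "cw_G_complex G cells cdim bd act"
    and fin: "finite_skeleton_below G act cells cdim k"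
    and bb: "\<forall>f\<in>cells. cdim f + 1 = k \<longrightarrow> (\<exists>B. \<forall>g\<in>carrier G. \<bar>\<beta> (act g f)\<bar> \<le> B)"
  shows "\<exists>B\<ge>0. \<forall>f\<in>cells. cdim f + 1 = k \<longrightarrow> \<bar>\<beta> f\<bar> \<le> B"
proof -
  define S where "S = {e\<in>cells. cdim e + 1 = k}"
  define Ob where "Ob = orbit_of G act ` S"
  have fO: "finite Ob" using fin unfolding finite_skeleton_below_def Ob_def S_def
    by (rule finite_subset[rotated]) auto
  define r where "r ob = (SOME e. e \<in> S \<and> orbit_of G act e = ob)" for ob
  have r: "r ob \<in> S \<and> orbit_of G act (r ob) = ob" if "ob \<in> Ob" for ob
    unfolding r_def by (rule someI_ex) (use that Ob_def in auto)
  define Bf where "Bf e = (SOME B. \<forall>g\<in>carrier G. \<bar>\<beta> (act g e)\<bar> \<le> B)" for e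
  have Bf: "\<forall>g\<in>carrier G. \<bar>\<beta> (act g e)\<bar> \<le> Bf e" if "e \<in> S" for e
    unfolding Bf_def by (rule someI_ex) (use that bb S_def in auto)
  define B where "B = Max (insert 0 ((\<lambda>ob. Bf (r ob)) ` Ob))"
  have "\<bar>\<beta> f\<bar> \<le> B" if f: "f \<in> cells" "cdim f + 1 = k" for f
  proof -
    have fS: "f \<in> S" using f S_def by auto
    let ?ob = "orbit_of G act f"
    have oO: "?ob \<in> Ob" using fS Ob_def by auto
    have one: "act \<one>\<^bsub>G\<^esub> f = f" "\<one>\<^bsub>G\<^esub> \<in> carrier G"
      using cx f unfolding cw_G_complex_def by (auto intro: monoid.one_closed group.is_monoid)
    have "f \<in> ?ob" using one unfolding orbit_of_def by force
    hence "f \<in> orbit_of G act (r ?ob)" using r[OF oO] by simp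
    then obtain g where g: "g \<in> carrier G" "f = act g (r ?ob)" unfolding orbit_of_def by auto
    have "\<bar>\<beta> f\<bar> \<le> Bf (r ?ob)" using Bf[of "r ?ob"] r[OF oO] g by auto
    also have "\<dots> \<le> B" unfolding B_def using fO oO by (intro Max_ge) auto
    finally show ?thesis .
  qed
  moreover have "B \<ge> 0" unfolding B_def using fO by (intro Max_ge) auto
  ultimately show ?thesis by blast
qed

lemma converse:
  assumes cx: "cw_G_complex G cells cdim bd act"
    and fin: "finite_skeleton_below G act cells cdim k"
    and coh: "coh_infty_zero G act cells cdim bd k \<alpha>"
  shows "\<exists>\<Lambda>\<ge>0. \<forall>c. is_chain cells cdim k c \<longrightarrow>
              \<bar>cochain_eval \<alpha> c\<bar> \<le> \<Lambda> * norm1 (chain_bdry bd c)"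
proof -
  obtain \<beta> where bb: "\<forall>f\<in>cells. cdim f + 1 = k \<longrightarrow> (\<exists>B. \<forall>g\<in>carrier G. \<bar>\<beta> (act g f)\<bar> \<le> B)"
    and ab: "\<forall>e\<in>cells. cdim e = k \<longrightarrow> \<alpha> e = coboundary bd \<beta> e"
    using coh unfolding coh_infty_zero_def by blast
  obtain B where B0: "B \<ge> 0" and B: "\<forall>f\<in>cells. cdim f + 1 = k \<longrightarrow> \<bar>\<beta> f\<bar> \<le> B"
    using uniform_bound[OF cx fin bb] by blast
  have fin1: "\<And>e. finite {f. bd e f \<noteq> 0}"
   and inc: "\<And>e f. bd e f \<noteq> 0 \<Longrightarrow> e \<in> cells \<and> f \<in> cells \<and> cdim e = cdim f + 1"
    using cx unfolding cw_G_complex_def by blast+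
  have "\<bar>cochain_eval \<alpha> c\<bar> \<le> B * norm1 (chain_bdry bd c)" if c: "is_chain cells cdim k c" for c
  proof -
    define E where "E = {e. c e \<noteq> 0}"
    have fE: "finite E" and Ek: "\<And>e. e \<in> E \<Longrightarrow> e \<in> cells \<and> cdim e = k"
      using c unfolding is_chain_def E_def by auto
    define F where "F = (\<Union>e\<in>E. {f. bd e f \<noteq> 0})"
    have fF: "finite F" using fE fin1 F_def by auto
    have sF: "{f. chain_bdry bd c f \<noteq> 0} \<subseteq> F"
    proof
      fix f assume "f \<in> {f. chain_bdry bd c f \<noteq> 0}"
      then obtain e where "c e \<noteq> 0" "c e * of_int (bd e f) \<noteq> 0"
        unfolding chain_bdry_def by (auto elim: sum.not_neutral_contains_not_neutral)
      then show "f \<in> F" unfolding F_def E_def by auto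
    qed
    have cob: "coboundary bd \<beta> e = (\<Sum>f\<in>F. of_int (bd e f) * \<beta> f)" if "e \<in> E" for e
      unfolding coboundary_def using that fF F_def by (intro sum.mono_neutral_left) auto
    have "cochain_eval \<alpha> c = (\<Sum>e\<in>E. c e * \<alpha> e)" unfolding cochain_eval_def E_def ..
    also have "\<dots> = (\<Sum>e\<in>E. \<Sum>f\<in>F. c e * of_int (bd e f) * \<beta> f)"
      using ab Ek cob by (simp add: sum_distrib_left mult.assoc)
    also have "\<dots> = (\<Sum>f\<in>F. \<Sum>e\<in>E. c e * of_int (bd e f) * \<beta> f)" by (rule sum.swap)
    also have "\<dots> = (\<Sum>f\<in>F. chain_bdry bd c f * \<beta> f)"
      unfolding chain_bdry_def E_def[symmetric] by (simp add: sum_distrib_right)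
    finally have eq: "cochain_eval \<alpha> c = (\<Sum>f\<in>F. chain_bdry bd c f * \<beta> f)" .
    have le: "\<bar>chain_bdry bd c f * \<beta> f\<bar> \<le> B * \<bar>chain_bdry bd c f\<bar>" if "f \<in> F" for f
    proof (cases "chain_bdry bd c f = 0")
      case True then show ?thesis by simp
    next
      case False
      from that obtain e where "e \<in> E" "bd e f \<noteq> 0" unfolding F_def by auto
      hence "f \<in> cells" "cdim f + 1 = k" using inc Ek by (metis, metis)
      hence "\<bar>\<beta> f\<bar> \<le> B" using B by auto
      then show ?thesis by (simp add: abs_mult) (metis abs_ge_zero mult.commute mult_left_mono)
    qed
    have "\<bar>cochain_eval \<alpha> c\<bar> \<le> (\<Sum>f\<in>F. \<bar>chain_bdry bd c f * \<beta> f\<bar>)"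
      unfolding eq by (rule sum_abs)
    also have "\<dots> \<le> (\<Sum>f\<in>F. B * \<bar>chain_bdry bd c f\<bar>)" using le by (rule sum_mono)
    also have "\<dots> = B * norm1 (chain_bdry bd c)"
      by (simp add: n1_alt[OF fF sF] sum_distrib_left)
    finally show ?thesis .
  qed
  then show ?thesis using B0 by blast
qed




lemma chain_add: "is_chain cells cdim k c1 \<Longrightarrow> is_chain cells cdim k c2 \<Longrightarrow> is_chain cells cdim k (\<lambda>x. c1 x + c2 x)"
  unfolding is_chain_def
  apply (intro conjI)
   apply (auto intro: finite_subset[of _ "{e. c1 e \<noteq> 0} \<union> {e. c2 e \<noteq> 0}"])[1]
  by (metis add.right_neutral add_0)

lemma chain_scale: "is_chain cells cdim k c \<Longrightarrow> is_chain cells cdim k (\<lambda>x. r * c x)"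
  unfolding is_chain_def
  by (auto intro: finite_subset[of _ "{e. c e \<noteq> 0}"])

lemma chain_zero: "is_chain cells cdim k (\<lambda>_. 0)" unfolding is_chain_def by auto

lemma fs_zero: "fs (\<lambda>_. 0)" unfolding fs_def by auto

lemma ev_zero: "cochain_eval b (\<lambda>_. 0) = 0" unfolding cochain_eval_def by simp
lemma bd_zero: "chain_bdry bd (\<lambda>_. 0) = (\<lambda>_. 0)" unfolding chain_bdry_def by simp

lemma ev_delta: "cochain_eval b (\<lambda>x. if x = f then 1 else 0) = b f"
proof -
  have "{e. (if e = f then 1 else 0::real) \<noteq> 0} = {f}" by auto
  then show ?thesis unfolding cochain_eval_def by simp
qed

lemma n1_delta: "norm1 (\<lambda>x. if x = f then r else 0) = \<bar>r\<bar>"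
proof (cases "r = 0")
  case False
  have "{e. (if e = f then r else 0::real) \<noteq> 0} = {f}" using False by auto
  then show ?thesis unfolding norm1_def by simp
qed (simp add: norm1_def)

lemma fs_delta: "fs (\<lambda>x. if x = f then r else 0)"
  unfolding fs_def by (rule finite_subset[of _ "{f}"]) auto

lemma finite_in_chain:
  assumes "finite F" "F \<subseteq> \<Union>C" "C \<noteq> {}" "chain\<^sub>\<subseteq> C"
  shows "\<exists>R\<in>C. F \<subseteq> R"
  using assms
proof (induction F rule: finite_induct)
  case empty then show ?case by auto
next
  case (insert x F)
  then obtain R where R: "R \<in> C" "F \<subseteq> R" by auto
  from insert obtain R' where R': "R' \<in> C" "x \<in> R'" by auto
  from \<open>chain\<^sub>\<subseteq> C\<close> R R' have "R \<subseteq> R' \<or> R' \<subseteq> R" unfolding chain_subset_def by blast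
  then show ?case using R R' by blast
qed

locale hb =
  fixes G :: "('g,'b) monoid_scheme" and cells :: "'c set" and cdim :: "'c \<Rightarrow> nat"
    and bd :: "'c \<Rightarrow> 'c \<Rightarrow> int" and act :: "'g \<Rightarrow> 'c \<Rightarrow> 'c"
    and k :: nat and \<alpha> :: "'c \<Rightarrow> real" and \<Lambda> :: real
  assumes cx: "cw_G_complex G cells cdim bd act"
    and L0: "\<Lambda> \<ge> 0"
    and hyp: "\<forall>c. is_chain cells cdim k c \<longrightarrow> \<bar>cochain_eval \<alpha> c\<bar> \<le> \<Lambda> * norm1 (chain_bdry bd c)"
begin

definition good :: "('c \<times> real) set \<Rightarrow> bool" where
  "good R \<longleftrightarrow> single_valued R \<and>
    (\<forall>c a b. is_chain cells cdim k c \<longrightarrow> fs a \<longrightarrow> (\<forall>g. a g \<noteq> 0 \<longrightarrow> (g, b g) \<in> R) \<longrightarrow>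
       cochain_eval \<alpha> c + cochain_eval b a \<le> \<Lambda> * norm1 (\<lambda>x. chain_bdry bd c x + a x))"

lemma chain_union: assumes C: "C \<in> chains {R. good R}" shows "good (\<Union>C)"
proof -
  have Cg: "\<And>R. R \<in> C \<Longrightarrow> good R" and ch: "chain\<^sub>\<subseteq> C" using C unfolding chains_def by auto
  have sv: "single_valued (\<Union>C)"
    unfolding single_valued_def
  proof (intro allI impI)
    fix x y z assume "(x, y) \<in> \<Union>C" "(x, z) \<in> \<Union>C"
    then obtain R1 R2 where "R1 \<in> C" "R2 \<in> C" "(x,y) \<in> R1" "(x,z) \<in> R2" by auto
    moreover have "R1 \<subseteq> R2 \<or> R2 \<subseteq> R1" using ch \<open>R1 \<in> C\<close> \<open>R2 \<in> C\<close> unfolding chain_subset_def by blast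
    ultimately show "y = z" using Cg unfolding good_def single_valued_def by blast
  qed
  have "cochain_eval \<alpha> c + cochain_eval b a \<le> \<Lambda> * norm1 (\<lambda>x. chain_bdry bd c x + a x)"
    if c: "is_chain cells cdim k c" and a: "fs a" and ab: "\<forall>g. a g \<noteq> 0 \<longrightarrow> (g, b g) \<in> \<Union>C" for c a b
  proof (cases "{g. a g \<noteq> 0} = {}")
    case True
    then have a0: "a = (\<lambda>_. 0)" by auto
    show ?thesis using hyp c unfolding a0 ev_zero by auto
  next
    case False
    define F where "F = (\<lambda>g. (g, b g)) ` {g. a g \<noteq> 0}"
    have "finite F" using a unfolding F_def fs_def by auto
    moreover have "F \<subseteq> \<Union>C" using ab F_def by auto
    moreover have "C \<noteq> {}" using \<open>F \<subseteq> \<Union>C\<close> False F_def by auto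
    ultimately obtain R where R: "R \<in> C" "F \<subseteq> R" using finite_in_chain ch by blast
    have "\<forall>g. a g \<noteq> 0 \<longrightarrow> (g, b g) \<in> R" using R F_def by auto
    then show ?thesis using Cg[OF R(1)] c a unfolding good_def by blast
  qed
  then show ?thesis using sv unfolding good_def by blast
qed

end



context hb begin

lemma extend:
  assumes gR: "good R" and fR: "f \<notin> Domain R"
  shows "\<exists>t. good (insert (f,t) R)"
proof -
  have sv: "single_valued R"
    and GR: "\<And>c a b. is_chain cells cdim k c \<Longrightarrow> fs a \<Longrightarrow> (\<forall>g. a g \<noteq> 0 \<longrightarrow> (g, b g) \<in> R) \<Longrightarrow>
       cochain_eval \<alpha> c + cochain_eval b a \<le> \<Lambda> * norm1 (\<lambda>x. chain_bdry bd c x + a x)"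
    using gR unfolding good_def by blast+
  define \<beta>0 where "\<beta>0 g = (SOME t. (g,t) \<in> R)" for g
  have \<beta>0R: "(g, \<beta>0 g) \<in> R" if "g \<in> Domain R" for g
    unfolding \<beta>0_def by (rule someI_ex) (use that in auto)
  define \<delta> where "\<delta> = (\<lambda>x. if x = f then 1 else (0::real))"
  have fs\<delta>: "fs \<delta>" unfolding \<delta>_def by (rule fs_delta)
  define P where "P c a \<longleftrightarrow> is_chain cells cdim k c \<and> fs a \<and> (\<forall>g. a g \<noteq> 0 \<longrightarrow> g \<in> Domain R)" for c a
  have G': "cochain_eval \<alpha> c + cochain_eval \<beta>0 a \<le> \<Lambda> * norm1 (\<lambda>x. chain_bdry bd c x + a x)"
    if "P c a" for c a
    using that GR[of c a \<beta>0] \<beta>0R unfolding P_def by blast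
  have fsB: "fs (chain_bdry bd c)" if "is_chain cells cdim k c" for c
    using bd_fs[OF cx chain_fs[OF that]] .
  have key: "cochain_eval \<alpha> c1 + cochain_eval \<beta>0 a1 - \<Lambda> * norm1 (\<lambda>x. chain_bdry bd c1 x + a1 x - \<delta> x)
      \<le> \<Lambda> * norm1 (\<lambda>x. chain_bdry bd c2 x + a2 x + \<delta> x) - cochain_eval \<alpha> c2 - cochain_eval \<beta>0 a2"
    if P1: "P c1 a1" and P2: "P c2 a2" for c1 a1 c2 a2
  proof -
    have c1: "is_chain cells cdim k c1" "fs a1" and c2: "is_chain cells cdim k c2" "fs a2"
      using P1 P2 unfolding P_def by auto
    have P12: "P (\<lambda>x. c1 x + c2 x) (\<lambda>x. a1 x + a2 x)"
      unfolding P_def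
    proof (intro conjI allI impI)
      show "is_chain cells cdim k (\<lambda>x. c1 x + c2 x)" using c1(1) c2(1) by (rule chain_add)
      show "fs (\<lambda>x. a1 x + a2 x)" using c1 c2 by (intro fs_add) auto
      fix g assume "a1 g + a2 g \<noteq> 0"
      then have "a1 g \<noteq> 0 \<or> a2 g \<noteq> 0" by auto
      then show "g \<in> Domain R" using P1 P2 unfolding P_def by blast
    qed
    have v1: "fs (\<lambda>x. chain_bdry bd c1 x + a1 x - \<delta> x)"
      using fs_add[OF fs_add[OF fsB[OF c1(1)] c1(2)] fs_scale[OF fs\<delta>, of "-1"]] by simp
    have v2: "fs (\<lambda>x. chain_bdry bd c2 x + a2 x + \<delta> x)"
      using fs_add[OF fs_add[OF fsB[OF c2(1)] c2(2)] fs\<delta>] by simp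
    have veq: "(\<lambda>x. chain_bdry bd (\<lambda>x. c1 x + c2 x) x + (a1 x + a2 x)) =
       (\<lambda>x. (chain_bdry bd c1 x + a1 x - \<delta> x) + (chain_bdry bd c2 x + a2 x + \<delta> x))"
      using bd_add[OF chain_fs[OF c1(1)] chain_fs[OF c2(1)]] by (auto simp: algebra_simps)
    have "cochain_eval \<alpha> c1 + cochain_eval \<alpha> c2 + (cochain_eval \<beta>0 a1 + cochain_eval \<beta>0 a2)
        = cochain_eval \<alpha> (\<lambda>x. c1 x + c2 x) + cochain_eval \<beta>0 (\<lambda>x. a1 x + a2 x)"
      using ev_add[OF chain_fs[OF c1(1)] chain_fs[OF c2(1)]] ev_add[OF c1(2) c2(2)] by simp
    also have "\<dots> \<le> \<Lambda> * norm1 (\<lambda>x. chain_bdry bd (\<lambda>x. c1 x + c2 x) x + (a1 x + a2 x))"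
      using G'[OF P12] .
    also have "\<dots> \<le> \<Lambda> * (norm1 (\<lambda>x. chain_bdry bd c1 x + a1 x - \<delta> x) + norm1 (\<lambda>x. chain_bdry bd c2 x + a2 x + \<delta> x))"
      unfolding veq using n1_add[OF v1 v2] L0 by (rule mult_left_mono)
    finally show ?thesis by (simp add: algebra_simps)
  qed
  have P00: "P (\<lambda>_. 0) (\<lambda>_. 0)" unfolding P_def by (auto simp: chain_zero fs_zero)
  define Ls where "Ls = {cochain_eval \<alpha> c + cochain_eval \<beta>0 a - \<Lambda> * norm1 (\<lambda>x. chain_bdry bd c x + a x - \<delta> x) | c a. P c a}"
  define t where "t = Sup Ls"
  have bdd: "bdd_above Ls" unfolding bdd_above_def Ls_def using key[OF _ P00] by blast
  have t_ge: "cochain_eval \<alpha> c + cochain_eval \<beta>0 a - \<Lambda> * norm1 (\<lambda>x. chain_bdry bd c x + a x - \<delta> x) \<le> t"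
    if "P c a" for c a
    unfolding t_def by (rule cSup_upper[OF _ bdd]) (use that Ls_def in blast)
  have t_le: "t \<le> \<Lambda> * norm1 (\<lambda>x. chain_bdry bd c x + a x + \<delta> x) - cochain_eval \<alpha> c - cochain_eval \<beta>0 a"
    if "P c a" for c a
    unfolding t_def by (rule cSup_least) (use P00 Ls_def key[OF _ that] in auto)
  have "good (insert (f,t) R)"
    unfolding good_def
  proof (intro conjI allI impI)
    show "single_valued (insert (f, t) R)" using sv fR unfolding single_valued_def by auto
  next
    fix c a b
    assume c: "is_chain cells cdim k c" and a: "fs a" and ab: "\<forall>g. a g \<noteq> 0 \<longrightarrow> (g, b g) \<in> insert (f, t) R"
    define s where "s = a f"
    define a' where "a' = (\<lambda>x. if x = f then 0 else a x)"
    have fa': "fs a'" unfolding a'_def fs_def using a unfolding fs_def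
      by (rule finite_subset[rotated]) auto
    have a'R: "\<forall>g. a' g \<noteq> 0 \<longrightarrow> (g, b g) \<in> R" using ab unfolding a'_def by auto
    have Pa': "P c a'" unfolding P_def using c fa' a'R by blast
    have aeq: "a = (\<lambda>x. a' x + s * \<delta> x)" unfolding a'_def s_def \<delta>_def by auto
    have evb: "cochain_eval b a' = cochain_eval \<beta>0 a'"
      unfolding cochain_eval_def
    proof (rule sum.cong[OF refl])
      fix g assume "g \<in> {e. a' e \<noteq> 0}"
      then have "(g, b g) \<in> R" "(g, \<beta>0 g) \<in> R" using a'R \<beta>0R by auto
      then show "a' g * b g = a' g * \<beta>0 g" using sv unfolding single_valued_def by metis
    qed
    have sbf: "s * b f = s * t"
    proof (cases "s = 0")
      case False
      then have "(f, b f) \<in> insert (f, t) R" using ab s_def by auto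
      then show ?thesis using fR by auto
    qed simp
    have eva: "cochain_eval b a = cochain_eval \<beta>0 a' + s * t"
      apply (subst aeq)
      apply (subst ev_add[OF fa' fs_scale[OF fs\<delta>]])
      apply (subst ev_scale[OF fs\<delta>])
      using evb sbf by (simp add: \<delta>_def ev_delta)
    define V where "V = (\<lambda>x. chain_bdry bd c x + a x)"
    have Veq: "V = (\<lambda>x. chain_bdry bd c x + a' x + s * \<delta> x)" unfolding V_def
      by (subst aeq) (simp add: algebra_simps)
    have fV: "fs V" unfolding V_def using fs_add[OF fsB[OF c] a] .
    have ev_s: "\<And>r. cochain_eval \<alpha> (\<lambda>x. r * c x) = r * cochain_eval \<alpha> c"
      using ev_scale[OF chain_fs[OF c]] .
    have ev_s': "\<And>r. cochain_eval \<beta>0 (\<lambda>x. r * a' x) = r * cochain_eval \<beta>0 a'"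
      using ev_scale[OF fa'] .
    have bd_s: "\<And>r x. chain_bdry bd (\<lambda>x. r * c x) x = r * chain_bdry bd c x"
      using bd_scale[OF chain_fs[OF c]] .
    have Pr: "P (\<lambda>x. r * c x) (\<lambda>x. r * a' x)" for r
      using Pa' unfolding P_def by (auto intro: chain_scale fs_scale)
    show "cochain_eval \<alpha> c + cochain_eval b a \<le> \<Lambda> * norm1 (\<lambda>x. chain_bdry bd c x + a x)"
      unfolding V_def[symmetric] eva
    proof (cases s "0::real" rule: linorder_cases)
      case equal
      then have "V = (\<lambda>x. chain_bdry bd c x + a' x)" unfolding Veq by simp
      then show "cochain_eval \<alpha> c + (cochain_eval \<beta>0 a' + s * t) \<le> \<Lambda> * norm1 V"
        using G'[OF Pa'] equal by simp
    next
      case greater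
      define r where "r = inverse s"
      have r0: "r > 0" "r * s = 1" using greater r_def by auto
      have vv: "(\<lambda>x. chain_bdry bd (\<lambda>x. r * c x) x + r * a' x + \<delta> x) = (\<lambda>x. r * V x)"
        unfolding Veq bd_s using r0 by (auto simp: algebra_simps)
      have "t \<le> \<Lambda> * (r * norm1 V) - r * cochain_eval \<alpha> c - r * cochain_eval \<beta>0 a'"
        using t_le[OF Pr[of r]] unfolding vv ev_s ev_s' n1_scale[OF fV] using r0 by simp
      then have "s * t \<le> s * (\<Lambda> * (r * norm1 V) - r * cochain_eval \<alpha> c - r * cochain_eval \<beta>0 a')"
        using greater by (simp add: mult_left_mono)
      also have "\<dots> = (r * s) * (\<Lambda> * norm1 V - cochain_eval \<alpha> c - cochain_eval \<beta>0 a')"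
        by (simp add: algebra_simps)
      also have "\<dots> = \<Lambda> * norm1 V - cochain_eval \<alpha> c - cochain_eval \<beta>0 a'"
        using r0 by simp
      finally show "cochain_eval \<alpha> c + (cochain_eval \<beta>0 a' + s * t) \<le> \<Lambda> * norm1 V" by simp
    next
      case less
      define r where "r = inverse (- s)"
      have r0: "r > 0" "r * s = -1" using less r_def by auto
      have rs: "\<And>y. r * (s * y) = - y" using r0 by (simp add: mult.assoc[symmetric])
      have vv: "(\<lambda>x. chain_bdry bd (\<lambda>x. r * c x) x + r * a' x - \<delta> x) = (\<lambda>x. r * V x)"
        unfolding Veq bd_s by (rule ext) (simp add: distrib_left rs)
      have "r * cochain_eval \<alpha> c + r * cochain_eval \<beta>0 a' - \<Lambda> * (r * norm1 V) \<le> t"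
        using t_ge[OF Pr[of r]] unfolding vv ev_s ev_s' n1_scale[OF fV] using r0 by simp
      then have ineq: "(-s) * (r * cochain_eval \<alpha> c + r * cochain_eval \<beta>0 a' - \<Lambda> * (r * norm1 V)) \<le> (-s) * t"
        using less by (simp add: mult_left_mono)
      have "(-s) * (r * cochain_eval \<alpha> c + r * cochain_eval \<beta>0 a' - \<Lambda> * (r * norm1 V))
          = (- (r * s)) * (cochain_eval \<alpha> c + cochain_eval \<beta>0 a' - \<Lambda> * norm1 V)"
        by (simp add: algebra_simps)
      also have "\<dots> = cochain_eval \<alpha> c + cochain_eval \<beta>0 a' - \<Lambda> * norm1 V"
        using r0 by simp
      finally have "(-s) * (r * cochain_eval \<alpha> c + r * cochain_eval \<beta>0 a' - \<Lambda> * (r * norm1 V))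
          = cochain_eval \<alpha> c + cochain_eval \<beta>0 a' - \<Lambda> * norm1 V" .
      with ineq show "cochain_eval \<alpha> c + (cochain_eval \<beta>0 a' + s * t) \<le> \<Lambda> * norm1 V" by simp
    qed
  qed
  then show ?thesis by blast
qed

end



lemma ev_delta_r: "cochain_eval b (\<lambda>x. if x = f then r else 0) = r * b f"
proof (cases "r = 0")
  case False
  have "{e. (if e = f then r else 0::real) \<noteq> 0} = {f}" using False by auto
  then show ?thesis unfolding cochain_eval_def by simp
qed (simp add: cochain_eval_def)

lemma bd_delta: "chain_bdry bd (\<lambda>x. if x = e then 1 else 0) = (\<lambda>f. of_int (bd e f))"
proof -
  have "{x. (if x = e then 1 else 0::real) \<noteq> 0} = {e}" by auto
  then show ?thesis unfolding chain_bdry_def by simp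
qed

lemma n1_bd: "norm1 (\<lambda>f. real_of_int (bd e f)) = (\<Sum>f\<in>{f. bd e f \<noteq> 0}. \<bar>real_of_int (bd e f)\<bar>)"
  unfolding norm1_def by simp

lemma ev_bd: "cochain_eval \<beta> (\<lambda>f. r * real_of_int (bd e f)) = r * coboundary bd \<beta> e"
proof (cases "r = 0")
  case False
  have "{f. r * real_of_int (bd e f) \<noteq> 0} = {f. bd e f \<noteq> 0}" using False by auto
  then show ?thesis unfolding cochain_eval_def coboundary_def
    by (simp add: sum_distrib_left mult.assoc)
qed (simp add: cochain_eval_def)

lemma chain_delta: "e \<in> cells \<Longrightarrow> cdim e = k \<Longrightarrow> is_chain cells cdim k (\<lambda>x. if x = e then 1 else 0)"
  unfolding is_chain_def by (auto intro: finite_subset[of _ "{e}"])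

context hb begin

lemma exists_beta:
  "\<exists>\<beta>. (\<forall>f. \<bar>\<beta> f\<bar> \<le> \<Lambda>) \<and> (\<forall>e\<in>cells. cdim e = k \<longrightarrow> \<alpha> e = coboundary bd \<beta> e)"
proof -
  have "\<forall>C\<in>chains {R. good R}. \<Union>C \<in> {R. good R}" using chain_union by blast
  from Zorn_Lemma[OF this] obtain M where gM: "good M"
    and max: "\<And>X. good X \<Longrightarrow> M \<subseteq> X \<Longrightarrow> X = M" by blast
  have dom: "f \<in> Domain M" for f
  proof (rule ccontr)
    assume "f \<notin> Domain M"
    with extend[OF gM] obtain t where "good (insert (f,t) M)" by blast
    with max have "insert (f,t) M = M" by blast
    then show False using \<open>f \<notin> Domain M\<close> by blast
  qed
  define \<beta> where "\<beta> g = (SOME t. (g,t) \<in> M)" for g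
  have \<beta>M: "(g, \<beta> g) \<in> M" for g unfolding \<beta>_def by (rule someI_ex) (use dom in auto)
  have GM: "cochain_eval \<alpha> c + cochain_eval \<beta> a \<le> \<Lambda> * norm1 (\<lambda>x. chain_bdry bd c x + a x)"
    if "is_chain cells cdim k c" "fs a" for c a
    using gM that \<beta>M unfolding good_def by blast
  have fin1: "\<And>e. finite {f. bd e f \<noteq> 0}" using cx unfolding cw_G_complex_def by blast
  have B: "\<bar>\<beta> f\<bar> \<le> \<Lambda>" for f
  proof -
    have "r * \<beta> f \<le> \<Lambda> * \<bar>r\<bar>" for r
      using GM[OF chain_zero fs_delta[of f r]]
      by (simp add: ev_zero bd_zero ev_delta_r n1_delta)
    from this[of 1] this[of "-1"] show ?thesis by auto
  qed
  have C: "\<alpha> e = coboundary bd \<beta> e" if e: "e \<in> cells" "cdim e = k" for e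
  proof -
    define d where "d = (\<lambda>x. if x = e then 1 else (0::real))"
    have cd: "is_chain cells cdim k d" unfolding d_def using chain_delta e .
    have fsb: "fs (\<lambda>f. r * real_of_int (bd e f))" for r
      unfolding fs_def by (rule finite_subset[OF _ fin1[of e]]) auto
    have ad: "cochain_eval \<alpha> d = \<alpha> e" unfolding d_def by (simp add: ev_delta)
    have n0: "norm1 (\<lambda>x. 0::real) = 0" unfolding norm1_def by simp
    have "cochain_eval \<alpha> d + cochain_eval \<beta> (\<lambda>f. (-1) * real_of_int (bd e f)) \<le> 0"
      using GM[OF cd fsb[of "-1"]] unfolding d_def bd_delta by (simp add: n0)
    moreover have "cochain_eval \<alpha> (\<lambda>x. (-1) * d x) + cochain_eval \<beta> (\<lambda>f. 1 * real_of_int (bd e f)) \<le> 0"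
    proof -
      have eqb: "chain_bdry bd (\<lambda>x. (-1) * d x) = (\<lambda>f. - real_of_int (bd e f))"
        by (rule ext, subst bd_scale[OF chain_fs[OF cd]]) (simp add: d_def bd_delta)
      show ?thesis using GM[OF chain_scale[OF cd, of "-1"] fsb[of 1]] unfolding eqb by (simp add: n0)
    qed
    ultimately show ?thesis
      unfolding ev_bd ev_scale[OF chain_fs[OF cd]] ad by simp
  qed
  show ?thesis using B C by blast
qed

end



lemma orbit_sum:
  assumes cx: "cw_G_complex G cells cdim bd act" and g: "g \<in> carrier G" and e: "e \<in> cells"
  shows "(\<Sum>f\<in>{f. bd (act g e) f \<noteq> 0}. \<bar>real_of_int (bd (act g e) f)\<bar>)
       = (\<Sum>f\<in>{f. bd e f \<noteq> 0}. \<bar>real_of_int (bd e f)\<bar>)"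
proof -
  have grp: "group G"
    and inc: "\<And>e f. bd e f \<noteq> 0 \<Longrightarrow> e \<in> cells \<and> f \<in> cells \<and> cdim e = cdim f + 1"
    and cl: "\<forall>g\<in>carrier G. \<forall>e\<in>cells. act g e \<in> cells \<and> cdim (act g e) = cdim e"
    and one: "\<forall>e\<in>cells. act \<one>\<^bsub>G\<^esub> e = e"
    and mul: "\<forall>g\<in>carrier G. \<forall>h\<in>carrier G. \<forall>e\<in>cells. act (g \<otimes>\<^bsub>G\<^esub> h) e = act g (act h e)"
    and binv: "\<forall>g\<in>carrier G. \<forall>e\<in>cells. \<forall>f\<in>cells. bd (act g e) (act g f) = bd e f"
    using cx unfolding cw_G_complex_def by blast+
  have ig: "inv\<^bsub>G\<^esub> g \<in> carrier G" using grp g by (rule group.inv_closed)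
  have bk: "act (inv\<^bsub>G\<^esub> g) (act g x) = x" if "x \<in> cells" for x
  proof -
    have "act (inv\<^bsub>G\<^esub> g) (act g x) = act (inv\<^bsub>G\<^esub> g \<otimes>\<^bsub>G\<^esub> g) x" using mul ig g that by simp
    also have "\<dots> = x" using one that group.l_inv[OF grp g] by simp
    finally show ?thesis .
  qed
  have fwd: "act g (act (inv\<^bsub>G\<^esub> g) x) = x" if "x \<in> cells" for x
  proof -
    have "act g (act (inv\<^bsub>G\<^esub> g) x) = act (g \<otimes>\<^bsub>G\<^esub> inv\<^bsub>G\<^esub> g) x" using mul ig g that by simp
    also have "\<dots> = x" using one that group.r_inv[OF grp g] by simp
    finally show ?thesis .
  qed
  have bij: "bij_betw (act g) {f. bd e f \<noteq> 0} {f. bd (act g e) f \<noteq> 0}"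
    unfolding bij_betw_def
  proof
    show "inj_on (act g) {f. bd e f \<noteq> 0}"
      proof (rule inj_onI)
      fix x y assume "x \<in> {f. bd e f \<noteq> 0}" "y \<in> {f. bd e f \<noteq> 0}" "act g x = act g y"
      then have "x \<in> cells" "y \<in> cells" using inc by auto
      then show "x = y" using bk \<open>act g x = act g y\<close> by metis
    qed
    show "act g ` {f. bd e f \<noteq> 0} = {f. bd (act g e) f \<noteq> 0}"
    proof (intro equalityI subsetI)
      fix y assume "y \<in> act g ` {f. bd e f \<noteq> 0}"
      then obtain f where "bd e f \<noteq> 0" "y = act g f" by auto
      then show "y \<in> {f. bd (act g e) f \<noteq> 0}" using binv g e inc by auto
    next
      fix y assume y: "y \<in> {f. bd (act g e) f \<noteq> 0}"
      then have yc: "y \<in> cells" using inc by blast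
      define f where "f = act (inv\<^bsub>G\<^esub> g) y"
      have fc: "f \<in> cells" using cl ig yc f_def by blast
      have "act g f = y" using fwd yc f_def by blast
      moreover have "bd e f \<noteq> 0" using binv g e fc y \<open>act g f = y\<close> by force
      ultimately show "y \<in> act g ` {f. bd e f \<noteq> 0}" by force
    qed
  qed
  have "(\<Sum>f\<in>{f. bd e f \<noteq> 0}. \<bar>real_of_int (bd (act g e) (act g f))\<bar>)
      = (\<Sum>f\<in>{f. bd (act g e) f \<noteq> 0}. \<bar>real_of_int (bd (act g e) f)\<bar>)"
    by (rule sum.reindex_bij_betw[OF bij])
  moreover have "(\<Sum>f\<in>{f. bd e f \<noteq> 0}. \<bar>real_of_int (bd (act g e) (act g f))\<bar>)
      = (\<Sum>f\<in>{f. bd e f \<noteq> 0}. \<bar>real_of_int (bd e f)\<bar>)"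
    by (rule sum.cong[OF refl]) (use binv g e inc in auto)
  ultimately show ?thesis by simp
qed

theorem mainTheorem5:
  fixes G :: "('g,'b) monoid_scheme" and cells :: "'c set" and cdim :: "'c \<Rightarrow> nat"
    and bd :: "'c \<Rightarrow> 'c \<Rightarrow> int" and act :: "'g \<Rightarrow> 'c \<Rightarrow> 'c"
    and k :: nat and \<alpha> :: "'c \<Rightarrow> real"
  assumes cx: "cw_G_complex G cells cdim bd act"
    and coc: "cellular_cocycle cells cdim bd k \<alpha>"
  shows "((\<exists>\<Lambda>\<ge>0. \<forall>c. is_chain cells cdim k c \<longrightarrow>
              \<bar>cochain_eval \<alpha> c\<bar> \<le> \<Lambda> * norm1 (chain_bdry bd c))
           \<longrightarrow> bounded_on_orbits G act cells cdim k \<alpha> \<and> coh_infty_zero G act cells cdim bd k \<alpha>)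
       \<and> ((finite_skeleton_below G act cells cdim k \<and> bounded_on_orbits G act cells cdim k \<alpha>
            \<and> coh_infty_zero G act cells cdim bd k \<alpha>)
           \<longrightarrow> (\<exists>\<Lambda>\<ge>0. \<forall>c. is_chain cells cdim k c \<longrightarrow>
              \<bar>cochain_eval \<alpha> c\<bar> \<le> \<Lambda> * norm1 (chain_bdry bd c)))"
proof (intro conjI impI)
  assume "\<exists>\<Lambda>\<ge>0. \<forall>c. is_chain cells cdim k c \<longrightarrow>
              \<bar>cochain_eval \<alpha> c\<bar> \<le> \<Lambda> * norm1 (chain_bdry bd c)"
  then obtain \<Lambda> where L0: "\<Lambda> \<ge> 0" and hyp: "\<forall>c. is_chain cells cdim k c \<longrightarrow>
              \<bar>cochain_eval \<alpha> c\<bar> \<le> \<Lambda> * norm1 (chain_bdry bd c)" by blast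
  interpret hb G cells cdim bd act k \<alpha> \<Lambda> using cx L0 hyp by unfold_locales
  obtain \<beta> where B: "\<forall>f. \<bar>\<beta> f\<bar> \<le> \<Lambda>" and C: "\<forall>e\<in>cells. cdim e = k \<longrightarrow> \<alpha> e = coboundary bd \<beta> e"
    using exists_beta by blast
  show "coh_infty_zero G act cells cdim bd k \<alpha>"
    unfolding coh_infty_zero_def using B C by blast
  have cl: "\<forall>g\<in>carrier G. \<forall>e\<in>cells. act g e \<in> cells \<and> cdim (act g e) = cdim e"
    using cx unfolding cw_G_complex_def by blast
  show "bounded_on_orbits G act cells cdim k \<alpha>"
    unfolding bounded_on_orbits_def
  proof (intro ballI impI)
    fix e assume e: "e \<in> cells" "cdim e = k"
    have "\<bar>\<alpha> (act g e)\<bar> \<le> \<Lambda> * (\<Sum>f\<in>{f. bd e f \<noteq> 0}. \<bar>real_of_int (bd e f)\<bar>)"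
      if g: "g \<in> carrier G" for g
    proof -
      have ch: "is_chain cells cdim k (\<lambda>x. if x = act g e then 1 else 0)"
        using chain_delta cl g e by metis
      have "\<bar>cochain_eval \<alpha> (\<lambda>x. if x = act g e then 1 else 0)\<bar>
          \<le> \<Lambda> * norm1 (chain_bdry bd (\<lambda>x. if x = act g e then 1 else 0))"
        using hyp ch by blast
      then show ?thesis unfolding bd_delta n1_bd orbit_sum[OF cx g e(1)] ev_delta .
    qed
    then show "\<exists>B. \<forall>g\<in>carrier G. \<bar>\<alpha> (act g e)\<bar> \<le> B" by blast
  qed
next
  assume "finite_skeleton_below G act cells cdim k \<and> bounded_on_orbits G act cells cdim k \<alpha>
            \<and> coh_infty_zero G act cells cdim bd k \<alpha>"
  then show "\<exists>\<Lambda>\<ge>0. \<forall>c. is_chain cells cdim k c \<longrightarrow>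
              \<bar>cochain_eval \<alpha> c\<bar> \<le> \<Lambda> * norm1 (chain_bdry bd c)"
    using converse[OF cx] by blast
qed


end
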